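(* Let $v$ be a weight on $[0,1)$ satisfying $\lim_{r\to1^-}v(r)=0$. For each $t\in[0,1)$ the operator $C_t$ maps $H^0_v$ into $H^0_v$, $C_t\colon H^0_v\to H^0_v$ is continuous, and $\|C_t\|_{H^0_v\to H^0_v}=\|C_t\|_{H^\infty_v\to H^\infty_v}$.
   Context: $\mathbb{D}=\{z\in\mathbb{C}:|z|<1\}$ and $H(\mathbb{D})$ is the space of holomorphic functions on $\mathbb{D}$. A weight is a continuous non-increasing function $v\colon[0,1)\to(0,\infty)$, extended to $\mathbb{D}$ by $v(z):=v(|z|)$. $H^\infty_v=\{f\in H(\mathbb{D}):\|f\|_{\infty,v}:=\sup_{z\in\mathbb{D}}|f(z)|v(z)<\infty\}$ and $H^0_v=\{f\in H(\mathbb{D}):\lim_{|z|\to1^-}|f(z)|v(z)=0\}$, both with the norm $\|\cdot\|_{\infty,v}$. For $t\in[0,1]$ the generalized Cesàro operator $C_t$ is defined on $f\in H(\mathbb{D})$ by $C_tf(0)=f(0)$ and $C_tf(z)=\frac{1}{z}\int_0^z\frac{f(\xi)}{1-t\xi}\,d\xi$ for $z\in\mathbb{D}\setminus\{0\}$. *)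

theory Defs
  imports "HOL-Complex_Analysis.Complex_Analysis"
begin

definition is_weight :: "(real \<Rightarrow> real) \<Rightarrow> bool" where
  "is_weight v \<longleftrightarrow> continuous_on {0..<1} v
     \<and> (\<forall>r s. 0 \<le> r \<and> r \<le> s \<and> s < 1 \<longrightarrow> v s \<le> v r)
     \<and> (\<forall>r. 0 \<le> r \<and> r < 1 \<longrightarrow> v r > 0)"

definition wnorm :: "(real \<Rightarrow> real) \<Rightarrow> (complex \<Rightarrow> complex) \<Rightarrow> real" where
  "wnorm v f = (SUP z\<in>ball 0 1. norm (f z) * v (norm z))"

definition Hinf_v :: "(real \<Rightarrow> real) \<Rightarrow> (complex \<Rightarrow> complex) set" where
  "Hinf_v v = {f. f holomorphic_on ball 0 1
      \<and> bdd_above ((\<lambda>z. norm (f z) * v (norm z)) ` ball 0 1)}"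

definition H0_v :: "(real \<Rightarrow> real) \<Rightarrow> (complex \<Rightarrow> complex) set" where
  "H0_v v = {f. f holomorphic_on ball 0 1
      \<and> (\<forall>e>0. \<exists>r<1. \<forall>z. r < norm z \<and> norm z < 1 \<longrightarrow> norm (f z) * v (norm z) < e)}"

definition cesaro :: "real \<Rightarrow> (complex \<Rightarrow> complex) \<Rightarrow> complex \<Rightarrow> complex" where
  "cesaro t f z = (if z = 0 then f 0
     else (1 / z) * contour_integral (linepath 0 z) (\<lambda>\<xi>. f \<xi> / (1 - of_real t * \<xi>)))"

text \<open>Operator norm of T restricted to the space S (with norm wnorm v),
  valued in the extended reals (so it is +infinity if T is unbounded).\<close>
definition opnorm :: "(real \<Rightarrow> real) \<Rightarrow> (complex \<Rightarrow> complex) set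
     \<Rightarrow> ((complex \<Rightarrow> complex) \<Rightarrow> (complex \<Rightarrow> complex)) \<Rightarrow> ereal" where
  "opnorm v S T = (SUP f\<in>{f\<in>S. wnorm v f \<le> 1}. ereal (wnorm v (T f)))"

end

theory Submission
  imports Defs
begin


lemma cesaro_hol:
  assumes hf: "f holomorphic_on ball 0 1" and t: "0 \<le> t" "t < 1"
  shows "cesaro t f holomorphic_on ball 0 1"
proof -
  define g where "g = (\<lambda>\<xi>. f \<xi> / (1 - of_real t * \<xi>))"
  have nz: "1 - of_real t * \<xi> \<noteq> 0" if "(\<xi>::complex) \<in> ball 0 1" for \<xi>
  proof
    assume "1 - of_real t * \<xi> = 0"
    then have "of_real t * \<xi> = 1" by simp
    then have "norm (of_real t * \<xi>) = 1" by simp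
    moreover have "norm (of_real t * \<xi>) < 1"
    proof -
      have "norm (of_real t * \<xi>) = t * norm \<xi>" using t by (simp add: norm_mult)
      also have "\<dots> \<le> norm \<xi>" using t by (simp add: mult_left_le_one_le)
      also have "\<dots> < 1" using that by simp
      finally show ?thesis .
    qed
    ultimately show False by simp
  qed
  have gh: "g holomorphic_on ball 0 1"
    unfolding g_def using hf nz by (intro holomorphic_intros) auto
  define G where "G = (\<lambda>x. contour_integral (linepath 0 x) g)"
  have der: "(G has_field_derivative g x) (at x)" if x: "x \<in> ball 0 1" for x
  proof -
    have "(G has_field_derivative g x) (at x within ball 0 1)"
      unfolding G_def
    proof (rule triangle_contour_integrals_convex_primitive)
      show "continuous_on (ball 0 1) g" using gh holomorphic_on_imp_continuous_on by blast
      fix b c :: complex assume bc: "b \<in> ball 0 1" "c \<in> ball 0 1"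
      have "(g has_contour_integral 0) (linepath 0 b +++ linepath b c +++ linepath c 0)"
      proof (rule Cauchy_theorem_convex_simple[OF gh convex_ball])
        have "closed_segment 0 b \<subseteq> ball 0 1" "closed_segment b c \<subseteq> ball 0 1" "closed_segment c 0 \<subseteq> ball 0 1"
          using bc by (intro closed_segment_subset; simp)+
        then show "path_image (linepath 0 b +++ linepath b c +++ linepath c 0) \<subseteq> ball 0 1"
          by (simp add: path_image_join)
        show "valid_path (linepath 0 b +++ linepath b c +++ linepath c 0)" by simp
        show "pathfinish (linepath 0 b +++ linepath b c +++ linepath c 0) = pathstart (linepath 0 b +++ linepath b c +++ linepath c 0)" by simp
      qed
      then show "contour_integral (linepath 0 b) g + contour_integral (linepath b c) g +
                       contour_integral (linepath c 0) g = 0"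
        by (rule has_chain_integral_chain_integral3)
    qed (use x in simp_all)
    then show ?thesis by (simp only: at_within_open[OF x open_ball])
  qed
  have Gh: "G holomorphic_on ball 0 1"
    unfolding holomorphic_on_open[OF open_ball] using der by blast
  have dG0: "deriv G 0 = f 0"
    using DERIV_imp_deriv[OF der[of 0]] by (simp add: g_def)
  have "(\<lambda>z. if z = 0 then deriv G 0 else (G z - G 0) / (z - 0)) holomorphic_on ball 0 1"
    by (rule pole_lemma[OF Gh]) (simp add: interior_open)
  moreover have "cesaro t f = (\<lambda>z. if z = 0 then deriv G 0 else (G z - G 0) / (z - 0))"
    unfolding dG0 by (rule ext) (simp add: cesaro_def G_def g_def divide_inverse mult.commute)
  ultimately show ?thesis by simp
qed



lemma kernel_ge:
  assumes t: "0 \<le> t" "t < 1" and x: "norm (\<xi>::complex) \<le> 1"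
  shows "1 - t \<le> norm (1 - of_real t * \<xi>)"
proof -
  have "norm (of_real t * \<xi>) = t * norm \<xi>" using t by (simp add: norm_mult)
  also have "\<dots> \<le> t" using t x by (simp add: mult_right_le_one_le)
  finally have a: "norm (of_real t * \<xi>) \<le> t" .
  have "norm (1::complex) - norm (of_real t * \<xi>) \<le> norm (1 - of_real t * \<xi>)"
    by (rule norm_triangle_ineq2)
  then show ?thesis using a by simp
qed

lemma seg_ball:
  assumes "(z::complex) \<in> ball 0 1"
  shows "closed_segment 0 z \<subseteq> ball 0 1"
  using assms by (intro closed_segment_subset) simp_all

lemma seg_norm:
  assumes "(\<xi>::complex) \<in> closed_segment 0 z"
  shows "norm \<xi> \<le> norm z"
  using segment_bound1[OF assms] by simp

lemma integrand_cont:
  assumes hf: "f holomorphic_on ball 0 1" and t: "0 \<le> t" "t < 1" and z: "z \<in> ball 0 1"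
  shows "(\<lambda>\<xi>. f \<xi> / (1 - of_real t * \<xi>)) contour_integrable_on (linepath 0 z)"
proof -
  have seg: "closed_segment 0 z \<subseteq> ball 0 1" using seg_ball[OF z] .
  have cf: "continuous_on (closed_segment 0 z) f"
    using holomorphic_on_imp_continuous_on[OF hf] seg by (rule continuous_on_subset)
  have nz: "1 - of_real t * \<xi> \<noteq> 0" if "\<xi> \<in> closed_segment 0 z" for \<xi>
  proof -
    have "norm \<xi> \<le> 1" using seg that by (auto simp: subset_iff)
    then have "1 - t \<le> norm (1 - of_real t * \<xi>)" using kernel_ge t by blast
    then show ?thesis using t by auto
  qed
  have "continuous_on (closed_segment 0 z) (\<lambda>\<xi>. f \<xi> / (1 - of_real t * \<xi>))"
    by (intro continuous_intros cf) (use nz in auto)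
  then show ?thesis by (rule contour_integrable_continuous_linepath)
qed

lemma cesaro_bound:
  assumes hf: "f holomorphic_on ball 0 1" and t: "0 \<le> t" "t < 1" and z: "z \<in> ball 0 1"
    and K: "0 \<le> K" and b: "\<And>\<xi>. \<xi> \<in> closed_segment 0 z \<Longrightarrow> norm (f \<xi>) \<le> K"
  shows "norm (cesaro t f z) \<le> K / (1 - t)"
proof (cases "z = 0")
  case True
  then have "norm (f 0) \<le> K" using b by simp
  moreover have "K \<le> K / (1 - t)" using K t by (simp add: le_divide_eq mult_right_le_one_le)
  ultimately show ?thesis using True by (simp add: cesaro_def)
next
  case False
  define g where "g = (\<lambda>\<xi>. f \<xi> / (1 - of_real t * \<xi>))"
  have seg: "closed_segment 0 z \<subseteq> ball 0 1" using seg_ball[OF z] .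
  have gb: "norm (g \<xi>) \<le> K / (1 - t)" if "\<xi> \<in> closed_segment 0 z" for \<xi>
  proof -
    have "norm \<xi> \<le> 1" using seg that by (auto simp: subset_iff)
    then have k: "1 - t \<le> norm (1 - of_real t * \<xi>)" using kernel_ge t by blast
    have "norm (g \<xi>) = norm (f \<xi>) / norm (1 - of_real t * \<xi>)"
      by (simp add: g_def norm_divide)
    also have "\<dots> \<le> K / (1 - t)"
      by (rule frac_le) (use K b[OF that] k t in auto)
    finally show ?thesis .
  qed
  have gi: "(g has_contour_integral contour_integral (linepath 0 z) g) (linepath 0 z)"
    using integrand_cont[OF hf t z] unfolding g_def[symmetric] by (rule has_contour_integral_integral)
  have "norm (contour_integral (linepath 0 z) g) \<le> K / (1 - t) * norm (z - 0)"
    by (rule has_contour_integral_bound_linepath[OF gi]) (use K t gb in auto)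
  then have "norm (contour_integral (linepath 0 z) g) / norm z \<le> K / (1 - t)"
    using False by (simp add: divide_le_eq)
  moreover have "cesaro t f z = (1 / z) * contour_integral (linepath 0 z) g"
    using False by (simp add: cesaro_def g_def)
  ultimately show ?thesis by (simp add: norm_mult norm_divide norm_inverse divide_inverse mult.commute)
qed

lemma cesaro_diff:
  assumes hf: "f holomorphic_on ball 0 1" and hg: "g holomorphic_on ball 0 1"
    and t: "0 \<le> t" "t < 1" and z: "z \<in> ball 0 1"
  shows "cesaro t g z - cesaro t f z = cesaro t (\<lambda>w. g w - f w) z"
proof (cases "z = 0")
  case True then show ?thesis by (simp add: cesaro_def)
next
  case False
  have e: "contour_integral (linepath 0 z) (\<lambda>\<xi>. g \<xi> / (1 - of_real t * \<xi>) - f \<xi> / (1 - of_real t * \<xi>))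
     = contour_integral (linepath 0 z) (\<lambda>\<xi>. g \<xi> / (1 - of_real t * \<xi>))
       - contour_integral (linepath 0 z) (\<lambda>\<xi>. f \<xi> / (1 - of_real t * \<xi>))"
    by (rule contour_integral_diff) (use integrand_cont[OF hf t z] integrand_cont[OF hg t z] in auto)
  have "(\<lambda>\<xi>. (g \<xi> - f \<xi>) / (1 - of_real t * \<xi>)) = (\<lambda>\<xi>. g \<xi> / (1 - of_real t * \<xi>) - f \<xi> / (1 - of_real t * \<xi>))"
    by (simp add: diff_divide_distrib)
  then show ?thesis using False e by (simp add: cesaro_def right_diff_distrib)
qed



lemma w_mono: "is_weight v \<Longrightarrow> 0 \<le> r \<Longrightarrow> r \<le> s \<Longrightarrow> s < 1 \<Longrightarrow> v s \<le> v r"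
  unfolding is_weight_def by blast

lemma w_pos: "is_weight v \<Longrightarrow> 0 \<le> r \<Longrightarrow> r < 1 \<Longrightarrow> 0 < v r"
  unfolding is_weight_def by blast

lemma w_norm_mono: "is_weight v \<Longrightarrow> norm (a::complex) \<le> norm b \<Longrightarrow> b \<in> ball 0 1 \<Longrightarrow> v (norm b) \<le> v (norm a)"
  by (rule w_mono) auto

lemma w_norm_pos: "is_weight v \<Longrightarrow> (b::complex) \<in> ball 0 1 \<Longrightarrow> 0 < v (norm b)"
  by (rule w_pos) auto

lemma w_small:
  fixes v :: "real \<Rightarrow> real"
  assumes "(v \<longlongrightarrow> 0) (at_left 1)" and "0 < c"
  obtains r2 where "r2 < 1" "\<And>s. r2 < s \<Longrightarrow> s < 1 \<Longrightarrow> v s < c"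
proof -
  have "eventually (\<lambda>s. v s < c) (at_left (1::real))"
    using order_tendstoD(2)[OF assms] .
  then obtain b where "b < 1" "\<And>y. y > b \<Longrightarrow> y < 1 \<Longrightarrow> v y < c"
    unfolding eventually_at_left_field by blast
  then show ?thesis using that by blast
qed

lemma cball_bound:
  assumes "f holomorphic_on ball 0 1" and "r < 1"
  obtains M where "0 \<le> M" "\<And>z. norm z \<le> r \<Longrightarrow> norm (f z) \<le> M"
proof -
  have "cball 0 r \<subseteq> ball (0::complex) 1" using assms(2) by auto
  then have "continuous_on (cball 0 r) f"
    using holomorphic_on_imp_continuous_on[OF assms(1)] continuous_on_subset by blast
  then have "compact (f ` cball 0 r)" by (intro compact_continuous_image) auto
  then have "bounded (f ` cball 0 r)" by (rule compact_imp_bounded)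
  then obtain B where B: "\<And>x. x \<in> f ` cball 0 r \<Longrightarrow> norm x \<le> B" unfolding bounded_iff by blast
  have "0 \<le> max B 0" by simp
  moreover have "norm (f z) \<le> max B 0" if "norm z \<le> r" for z
    using B[of "f z"] that by fastforce
  ultimately show ?thesis using that by blast
qed

lemma wnorm_ge:
  assumes "bdd_above ((\<lambda>z. norm (f z) * v (norm z)) ` ball 0 1)" "z \<in> ball 0 1"
  shows "norm (f z) * v (norm z) \<le> wnorm v f"
  unfolding wnorm_def by (rule cSUP_upper[OF assms(2,1)])

lemma wnorm_le:
  assumes "\<And>z. z \<in> ball 0 1 \<Longrightarrow> norm (f z) * v (norm z) \<le> B"
  shows "wnorm v f \<le> B"
  unfolding wnorm_def by (rule cSUP_least) (use assms in auto)

lemma H0_hol: "f \<in> H0_v v \<Longrightarrow> f holomorphic_on ball 0 1"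
  unfolding H0_v_def by blast

lemma H0_bdd:
  assumes w: "is_weight v" and f: "f \<in> H0_v v"
  shows "bdd_above ((\<lambda>z. norm (f z) * v (norm z)) ` ball 0 1)"
proof -
  have hf: "f holomorphic_on ball 0 1" using f by (rule H0_hol)
  have "\<exists>r<1. \<forall>z. r < norm z \<and> norm z < 1 \<longrightarrow> norm (f z) * v (norm z) < 1"
    using f unfolding H0_v_def by simp
  then obtain r where r: "r < 1" "\<And>z. r < norm z \<Longrightarrow> norm z < 1 \<Longrightarrow> norm (f z) * v (norm z) < 1"
    by blast
  obtain M where M: "0 \<le> M" "\<And>z. norm z \<le> r \<Longrightarrow> norm (f z) \<le> M"
    using cball_bound[OF hf r(1)] by blast
  have "norm (f z) * v (norm z) \<le> max (M * v 0) 1" if z: "z \<in> ball 0 1" for z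
  proof (cases "norm z \<le> r")
    case True
    have "v (norm z) \<le> v 0" using w_mono[OF w, of 0 "norm z"] z by simp
    moreover have "0 \<le> v (norm z)" using w_norm_pos[OF w z] by simp
    ultimately have "norm (f z) * v (norm z) \<le> M * v 0"
      using M(2)[OF True] M(1) by (intro mult_mono) auto
    then show ?thesis by simp
  next
    case False
    then have "norm (f z) * v (norm z) < 1" using r(2) z by simp
    then show ?thesis by simp
  qed
  then show ?thesis by (intro bdd_aboveI2) blast
qed

lemma H0_sub: "is_weight v \<Longrightarrow> H0_v v \<subseteq> Hinf_v v"
proof
  fix f assume "is_weight v" "f \<in> H0_v v"
  then show "f \<in> Hinf_v v" unfolding Hinf_v_def using H0_bdd[of v f] H0_hol[of f v] by simp
qed

lemma Hinf_hol: "f \<in> Hinf_v v \<Longrightarrow> f holomorphic_on ball 0 1"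
  unfolding Hinf_v_def by blast

lemma Hinf_bdd: "f \<in> Hinf_v v \<Longrightarrow> bdd_above ((\<lambda>z. norm (f z) * v (norm z)) ` ball 0 1)"
  unfolding Hinf_v_def by simp

lemma cesaro_wbound:
  assumes w: "is_weight v" and hf: "f holomorphic_on ball 0 1" and t: "0 \<le> t" "t < 1"
    and z: "z \<in> ball 0 1" and K: "0 \<le> K"
    and b: "\<And>\<xi>. \<xi> \<in> closed_segment 0 z \<Longrightarrow> norm (f \<xi>) * v (norm z) \<le> K"
  shows "norm (cesaro t f z) * v (norm z) \<le> K / (1 - t)"
proof -
  have vp: "0 < v (norm z)" using w_norm_pos[OF w z] .
  have h: "norm (cesaro t f z) \<le> (K / v (norm z)) / (1 - t)"
  proof (rule cesaro_bound[OF hf t z])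
    show "0 \<le> K / v (norm z)" using K vp by simp
    fix \<xi> assume "\<xi> \<in> closed_segment 0 z"
    then show "norm (f \<xi>) \<le> K / v (norm z)" using b vp by (simp add: le_divide_eq)
  qed
  have "norm (cesaro t f z) * v (norm z) \<le> (K / v (norm z)) / (1 - t) * v (norm z)"
    by (rule mult_right_mono[OF h]) (use vp in simp)
  also have "\<dots> = K / (1 - t)"
  proof -
    have "1 - t \<noteq> 0" using t by simp
    then show ?thesis using vp by (simp add: field_simps)
  qed
  finally show ?thesis .
qed



lemma cesaro_H0:
  assumes w: "is_weight v" and v0: "(v \<longlongrightarrow> 0) (at_left 1)" and t: "0 \<le> t" "t < 1"
    and f: "f \<in> H0_v v"
  shows "cesaro t f \<in> H0_v v"
proof -
  have hf: "f holomorphic_on ball 0 1" using f by (rule H0_hol)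
  have "\<exists>R<1. \<forall>z. R < norm z \<and> norm z < 1 \<longrightarrow> norm (cesaro t f z) * v (norm z) < e" if e: "e > 0" for e
  proof -
    define e' where "e' = e * (1 - t) / 2"
    have e': "0 < e'" using e t by (simp add: e'_def)
    have "\<exists>r<1. \<forall>z. r < norm z \<and> norm z < 1 \<longrightarrow> norm (f z) * v (norm z) < e'"
      using f e' unfolding H0_v_def by simp
    then obtain r where r: "r < 1" "\<And>z. r < norm z \<Longrightarrow> norm z < 1 \<Longrightarrow> norm (f z) * v (norm z) < e'"
      by blast
    obtain M where M: "0 \<le> M" "\<And>z. norm z \<le> r \<Longrightarrow> norm (f z) \<le> M"
      using cball_bound[OF hf r(1)] by blast
    have c: "0 < e' / (M + 1)" using e' M(1) by simp
    obtain r2 where r2: "r2 < 1" "\<And>s. r2 < s \<Longrightarrow> s < 1 \<Longrightarrow> v s < e' / (M + 1)"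
      using w_small[OF v0 c] by blast
    define R where "R = max r r2"
    have "norm (cesaro t f z) * v (norm z) < e" if z1: "R < norm z" and z2: "norm z < 1" for z
    proof -
      have z: "z \<in> ball 0 1" using z2 by simp
      have "norm (cesaro t f z) * v (norm z) \<le> e' / (1 - t)"
      proof (rule cesaro_wbound[OF w hf t z])
        show "0 \<le> e'" using e' by simp
        fix \<xi> assume xi: "\<xi> \<in> closed_segment 0 z"
        have nx: "norm \<xi> \<le> norm z" using seg_norm[OF xi] .
        show "norm (f \<xi>) * v (norm z) \<le> e'"
        proof (cases "r < norm \<xi>")
          case True
          have "v (norm z) \<le> v (norm \<xi>)" using w_norm_mono[OF w nx z] .
          then have "norm (f \<xi>) * v (norm z) \<le> norm (f \<xi>) * v (norm \<xi>)"
            by (simp add: mult_left_mono)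
          also have "\<dots> < e'" using r(2)[OF True] nx z2 by simp
          finally show ?thesis by simp
        next
          case False
          have vz: "v (norm z) < e' / (M + 1)" using r2(2)[of "norm z"] z1 z2 by (simp add: R_def)
          have vzp: "0 \<le> v (norm z)" using w_norm_pos[OF w z] by simp
          have "norm (f \<xi>) * v (norm z) \<le> M * (e' / (M + 1))"
            using M(2)[of \<xi>] False vz vzp M(1) by (intro mult_mono) auto
          also have "\<dots> \<le> e'" using M(1) e' by (simp add: field_simps)
          finally show ?thesis .
        qed
      qed
      also have "\<dots> = e / 2"
      proof -
        have "1 - t \<noteq> 0" using t by simp
        then show ?thesis by (simp add: e'_def field_simps)
      qed
      also have "\<dots> < e" using e by simp
      finally show ?thesis .
    qed
    moreover have "R < 1" using r r2 by (simp add: R_def)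
    ultimately show ?thesis by blast
  qed
  then show ?thesis using cesaro_hol[OF hf t] unfolding H0_v_def by simp
qed



lemma cesaro_cont:
  assumes w: "is_weight v" and t: "0 \<le> t" "t < 1"
    and f: "f \<in> H0_v v" and g: "g \<in> H0_v v"
  shows "wnorm v (\<lambda>z. cesaro t g z - cesaro t f z) \<le> wnorm v (\<lambda>z. g z - f z) / (1 - t)"
proof -
  have hf: "f holomorphic_on ball 0 1" using f by (rule H0_hol)
  have hg: "g holomorphic_on ball 0 1" using g by (rule H0_hol)
  define h where "h = (\<lambda>z. g z - f z)"
  have hh: "h holomorphic_on ball 0 1" unfolding h_def using hf hg by (intro holomorphic_intros)
  obtain Bf where Bf: "\<And>z. z \<in> ball 0 1 \<Longrightarrow> norm (f z) * v (norm z) \<le> Bf"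
    using H0_bdd[OF w f] unfolding bdd_above_def by blast
  obtain Bg where Bg: "\<And>z. z \<in> ball 0 1 \<Longrightarrow> norm (g z) * v (norm z) \<le> Bg"
    using H0_bdd[OF w g] unfolding bdd_above_def by blast
  have "norm (h z) * v (norm z) \<le> Bg + Bf" if z: "z \<in> ball 0 1" for z
  proof -
    have "0 \<le> v (norm z)" using w_norm_pos[OF w z] by simp
    then have "norm (h z) * v (norm z) \<le> (norm (g z) + norm (f z)) * v (norm z)"
      unfolding h_def by (intro mult_right_mono norm_triangle_ineq4)
    also have "\<dots> \<le> Bg + Bf" using Bf[OF z] Bg[OF z] by (simp add: distrib_right)
    finally show ?thesis .
  qed
  then have bh: "bdd_above ((\<lambda>z. norm (h z) * v (norm z)) ` ball 0 1)"
    by (intro bdd_aboveI2) blast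
  have "norm (cesaro t h z) * v (norm z) \<le> wnorm v h / (1 - t)" if z: "z \<in> ball 0 1" for z
  proof (rule cesaro_wbound[OF w hh t z])
    have "0 \<le> norm (h z) * v (norm z)" using w_norm_pos[OF w z] by simp
    also have "\<dots> \<le> wnorm v h" by (rule wnorm_ge[OF bh z])
    finally show "0 \<le> wnorm v h" .
    fix \<xi> assume xi: "\<xi> \<in> closed_segment 0 z"
    have xb: "\<xi> \<in> ball 0 1" using seg_ball[OF z] xi by blast
    have "v (norm z) \<le> v (norm \<xi>)" using w_norm_mono[OF w seg_norm[OF xi] z] .
    then have "norm (h \<xi>) * v (norm z) \<le> norm (h \<xi>) * v (norm \<xi>)"
      by (simp add: mult_left_mono)
    also have "\<dots> \<le> wnorm v h" by (rule wnorm_ge[OF bh xb])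
    finally show "norm (h \<xi>) * v (norm z) \<le> wnorm v h" .
  qed
  then have "norm (cesaro t g z - cesaro t f z) * v (norm z) \<le> wnorm v h / (1 - t)" if z: "z \<in> ball 0 1" for z
    using cesaro_diff[OF hf hg t z] that unfolding h_def by simp
  then show ?thesis unfolding h_def by (rule wnorm_le)
qed

lemma ereal_Sup_le:
  fixes X :: ereal
  assumes "\<And>z. z \<in> ball (0::complex) 1 \<Longrightarrow> ereal (F z) \<le> X"
  shows "ereal (SUP z\<in>ball 0 1. F z) \<le> X"
proof (cases X)
  case (real c)
  have "(SUP z\<in>ball 0 1. F z) \<le> c"
    by (rule cSUP_least) (use assms real in auto)
  then show ?thesis using real by simp
next
  case PInf then show ?thesis by simp
next
  case MInf
  have "ereal (F 0) \<le> X" using assms[of 0] by simp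
  then show ?thesis using MInf by simp
qed



lemma dil_in:
  assumes "0 \<le> r" "r \<le> 1" "(w::complex) \<in> ball 0 1"
  shows "of_real r * w \<in> ball 0 1" "norm (of_real r * w) \<le> norm w"
proof -
  have "norm (of_real r * w) = r * norm w" using assms by (simp add: norm_mult)
  also have "\<dots> \<le> norm w" using assms by (simp add: mult_left_le_one_le)
  finally show "norm (of_real r * w) \<le> norm w" .
  then show "of_real r * w \<in> ball 0 1" using assms by simp
qed

lemma dil_hol:
  assumes hf: "f holomorphic_on ball 0 1" and r: "0 \<le> r" "r \<le> 1"
  shows "(\<lambda>w. f (of_real r * w)) holomorphic_on ball 0 1"
proof -
  have "(f \<circ> (\<lambda>w. of_real r * w)) holomorphic_on ball 0 1"
  proof (rule holomorphic_on_compose_gen[OF _ hf])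
    show "(\<lambda>w::complex. of_real r * w) holomorphic_on ball 0 1" by (intro holomorphic_intros)
    show "(\<lambda>w::complex. of_real r * w) ` ball 0 1 \<subseteq> ball 0 1" by (rule image_subsetI) (use dil_in(1)[OF r] in blast)
  qed
  then show ?thesis by (simp add: o_def)
qed

lemma dil_H0:
  assumes w: "is_weight v" and v0: "(v \<longlongrightarrow> 0) (at_left 1)" and f: "f \<in> Hinf_v v"
    and r: "0 \<le> r" "r < 1"
  shows "(\<lambda>w. f (of_real r * w)) \<in> H0_v v"
proof -
  have hf: "f holomorphic_on ball 0 1" using f by (rule Hinf_hol)
  obtain M where M: "0 \<le> M" "\<And>z. norm z \<le> r \<Longrightarrow> norm (f z) \<le> M"
    using cball_bound[OF hf r(2)] by blast
  have "\<exists>r2<1. \<forall>z. r2 < norm z \<and> norm z < 1 \<longrightarrow> norm (f (of_real r * z)) * v (norm z) < e"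
    if e: "e > 0" for e
  proof -
    have c: "0 < e / (M + 1)" using e M(1) by simp
    obtain r2 where r2: "r2 < 1" "\<And>s. r2 < s \<Longrightarrow> s < 1 \<Longrightarrow> v s < e / (M + 1)"
      using w_small[OF v0 c] by blast
    have "norm (f (of_real r * z)) * v (norm z) < e" if z1: "r2 < norm z" and z2: "norm z < 1" for z
    proof -
      have "norm (of_real r * z) = r * norm z" using r by (simp add: norm_mult)
      also have "\<dots> \<le> r" using r z2 by (simp add: mult_right_le_one_le)
      finally have fz: "norm (f (of_real r * z)) \<le> M" using M(2) by blast
      have vz: "v (norm z) < e / (M + 1)" using r2(2) z1 z2 by blast
      have vzp: "0 \<le> v (norm z)" using w_pos[OF w, of "norm z"] z2 by simp
      have "norm (f (of_real r * z)) * v (norm z) \<le> M * (e / (M + 1))"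
        using fz vz vzp M(1) by (intro mult_mono) auto
      also have "\<dots> < e" using M(1) e by (simp add: field_simps)
      finally show ?thesis .
    qed
    then show ?thesis using r2(1) by blast
  qed
  then show ?thesis using dil_hol[OF hf r(1)] r unfolding H0_v_def by simp
qed

lemma dil_norm:
  assumes w: "is_weight v" and f: "f \<in> Hinf_v v" and r: "0 \<le> r" "r \<le> 1"
  shows "wnorm v (\<lambda>w. f (of_real r * w)) \<le> wnorm v f"
proof (rule wnorm_le)
  fix z :: complex assume z: "z \<in> ball 0 1"
  have a: "of_real r * z \<in> ball 0 1" "norm (of_real r * z) \<le> norm z" using dil_in[OF r z] by auto
  have "v (norm z) \<le> v (norm (of_real r * z))" using w_norm_mono[OF w a(2) z] .
  then have "norm (f (of_real r * z)) * v (norm z) \<le> norm (f (of_real r * z)) * v (norm (of_real r * z))"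
    by (simp add: mult_left_mono)
  also have "\<dots> \<le> wnorm v f" by (rule wnorm_ge[OF Hinf_bdd[OF f] a(1)])
  finally show "norm (f (of_real r * z)) * v (norm z) \<le> wnorm v f" .
qed



lemma opnorm_ge:
  assumes w: "is_weight v" and v0: "(v \<longlongrightarrow> 0) (at_left 1)" and t: "0 \<le> t" "t < 1"
    and f: "f \<in> Hinf_v v" and n: "wnorm v f \<le> 1"
  shows "ereal (wnorm v (cesaro t f)) \<le> opnorm v (H0_v v) (cesaro t)"
proof -
  let ?X = "opnorm v (H0_v v) (cesaro t)"
  have hf: "f holomorphic_on ball 0 1" using f by (rule Hinf_hol)
  have v0p: "0 < v 0" using w_pos[OF w, of 0] by simp
  have "ereal (norm (cesaro t f z) * v (norm z)) \<le> ?X" if z: "z \<in> ball 0 1" for z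
  proof (rule ereal_le_epsilon2)
    fix \<epsilon> :: real assume \<epsilon>: "0 < \<epsilon>"
    define \<eta> where "\<eta> = \<epsilon> * (1 - t) / v 0"
    have \<eta>: "0 < \<eta>" using \<epsilon> t v0p by (simp add: \<eta>_def)
    have cb: "cball 0 (norm z) \<subseteq> ball 0 1" using z by auto
    have cf: "continuous_on (cball 0 (norm z)) f"
      using holomorphic_on_imp_continuous_on[OF hf] cb by (rule continuous_on_subset)
    have uc: "uniformly_continuous_on (cball 0 (norm z)) f"
      using compact_uniformly_continuous[OF cf compact_cball] .
    obtain \<delta> where \<delta>: "\<delta> > 0"
      "\<And>x x'. x \<in> cball 0 (norm z) \<Longrightarrow> x' \<in> cball 0 (norm z) \<Longrightarrow> dist x' x < \<delta> \<Longrightarrow> dist (f x') (f x) < \<eta>"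
      using uc \<eta> unfolding uniformly_continuous_on_def by metis
    define r where "r = max (1/2) (1 - \<delta>/2)"
    have r: "0 \<le> r" "r < 1" "r \<le> 1" "1 - r < \<delta>" using \<delta>(1) by (auto simp: r_def)
    define fr where "fr = (\<lambda>w. f (of_real r * w))"
    have frH0: "fr \<in> H0_v v" unfolding fr_def by (rule dil_H0[OF w v0 f r(1,2)])
    have frn: "wnorm v fr \<le> 1" unfolding fr_def using dil_norm[OF w f r(1,3)] n by linarith
    have hfr: "fr holomorphic_on ball 0 1" using frH0 by (rule H0_hol)
    have A: "ereal (wnorm v (cesaro t fr)) \<le> ?X"
      unfolding opnorm_def by (rule SUP_upper) (use frH0 frn in simp)
    have B: "norm (cesaro t fr z) * v (norm z) \<le> wnorm v (cesaro t fr)"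
      by (rule wnorm_ge[OF H0_bdd[OF w cesaro_H0[OF w v0 t frH0]] z])
    have C0: "norm (cesaro t (\<lambda>w. f w - fr w) z) \<le> \<eta> / (1 - t)"
    proof (rule cesaro_bound[OF _ t z])
      show "(\<lambda>w. f w - fr w) holomorphic_on ball 0 1" using hf hfr by (intro holomorphic_intros)
      show "0 \<le> \<eta>" using \<eta> by simp
      fix \<xi> assume xi: "\<xi> \<in> closed_segment 0 z"
      have nx: "norm \<xi> \<le> norm z" using seg_norm[OF xi] .
      have x1: "\<xi> \<in> cball 0 (norm z)" using nx by simp
      have nr: "norm (of_real r * \<xi>) = r * norm \<xi>" using r by (simp add: norm_mult)
      have "r * norm \<xi> \<le> norm \<xi>" using r by (simp add: mult_left_le_one_le)
      then have x2: "of_real r * \<xi> \<in> cball 0 (norm z)" using nx nr by simp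
      have "dist (of_real r * \<xi>) \<xi> = norm ((of_real r - 1) * \<xi>)"
        by (simp add: dist_norm algebra_simps)
      also have "\<dots> = (1 - r) * norm \<xi>"
      proof -
        have e1: "(of_real r - 1 :: complex) = of_real (r - 1)" by simp
        have "norm ((of_real r - 1) * \<xi>) = norm (of_real (r - 1) :: complex) * norm \<xi>"
          unfolding e1 by (rule norm_mult)
        moreover have "norm (of_real (r - 1) :: complex) = 1 - r"
          unfolding norm_of_real using r by simp
        ultimately show ?thesis by simp
      qed
      also have "\<dots> \<le> 1 - r"
        using r nx z by (intro mult_right_le_one_le) auto
      also have "\<dots> < \<delta>" using r by simp
      finally have "dist (f (of_real r * \<xi>)) (f \<xi>) < \<eta>" using \<delta>(2)[OF x1 x2] by blast
      then show "norm (f \<xi> - fr \<xi>) \<le> \<eta>" by (simp add: fr_def dist_norm norm_minus_commute)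
    qed
    have vz: "0 \<le> v (norm z)" "v (norm z) \<le> v 0"
      using w_norm_pos[OF w z] w_mono[OF w, of 0 "norm z"] z by auto
    have "norm (cesaro t (\<lambda>w. f w - fr w) z) * v (norm z) \<le> \<eta> / (1 - t) * v 0"
      using C0 vz \<eta> t by (intro mult_mono) auto
    also have "\<dots> = \<epsilon>"
    proof -
      have "1 - t \<noteq> 0" using t by simp
      then show ?thesis using v0p by (simp add: \<eta>_def field_simps)
    qed
    finally have C: "norm (cesaro t f z - cesaro t fr z) * v (norm z) \<le> \<epsilon>"
      using cesaro_diff[OF hfr hf t z] by simp
    have "norm (cesaro t f z) * v (norm z)
        \<le> (norm (cesaro t fr z) + norm (cesaro t f z - cesaro t fr z)) * v (norm z)"
      using vz(1) by (intro mult_right_mono) (auto simp: norm_triangle_sub)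
    also have "\<dots> \<le> wnorm v (cesaro t fr) + \<epsilon>" using B C by (simp add: distrib_right)
    finally have "ereal (norm (cesaro t f z) * v (norm z)) \<le> ereal (wnorm v (cesaro t fr)) + ereal \<epsilon>"
      by simp
    also have "\<dots> \<le> ?X + ereal \<epsilon>" using A by (rule add_right_mono)
    finally show "ereal (norm (cesaro t f z) * v (norm z)) \<le> ?X + ereal \<epsilon>" .
  qed
  then show ?thesis unfolding wnorm_def by (rule ereal_Sup_le)
qed

theorem corollary2p5:
  fixes v :: "real \<Rightarrow> real" and t :: real
  assumes "is_weight v"
    and "(v \<longlongrightarrow> 0) (at_left 1)"
    and "0 \<le> t" and "t < 1"
  shows "(\<forall>f\<in>H0_v v. cesaro t f \<in> H0_v v)
    \<and> (\<forall>f\<in>H0_v v. \<forall>e>0. \<exists>d>0. \<forall>g\<in>H0_v v.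
          wnorm v (\<lambda>z. g z - f z) < d \<longrightarrow> wnorm v (\<lambda>z. cesaro t g z - cesaro t f z) < e)
    \<and> opnorm v (H0_v v) (cesaro t) = opnorm v (Hinf_v v) (cesaro t)"
proof (intro conjI)
  note w = assms(1) and v0 = assms(2) and t = assms(3,4)
  show "\<forall>f\<in>H0_v v. cesaro t f \<in> H0_v v" using cesaro_H0[OF w v0 t] by blast
  show "\<forall>f\<in>H0_v v. \<forall>e>0. \<exists>d>0. \<forall>g\<in>H0_v v.
          wnorm v (\<lambda>z. g z - f z) < d \<longrightarrow> wnorm v (\<lambda>z. cesaro t g z - cesaro t f z) < e"
  proof (intro ballI allI impI)
    fix f e assume f: "f \<in> H0_v v" and e: "(0::real) < e"
    have tp: "0 < 1 - t" using t by simp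
    show "\<exists>d>0. \<forall>g\<in>H0_v v. wnorm v (\<lambda>z. g z - f z) < d \<longrightarrow> wnorm v (\<lambda>z. cesaro t g z - cesaro t f z) < e"
    proof (intro exI[of _ "e * (1 - t)"] conjI ballI impI)
      show "0 < e * (1 - t)" using e tp by simp
      fix g assume g: "g \<in> H0_v v" and d: "wnorm v (\<lambda>z. g z - f z) < e * (1 - t)"
      have "wnorm v (\<lambda>z. cesaro t g z - cesaro t f z) \<le> wnorm v (\<lambda>z. g z - f z) / (1 - t)"
        by (rule cesaro_cont[OF w t f g])
      also have "\<dots> < e" using d tp by (simp add: divide_less_eq)
      finally show "wnorm v (\<lambda>z. cesaro t g z - cesaro t f z) < e" .
    qed
  qed
  show "opnorm v (H0_v v) (cesaro t) = opnorm v (Hinf_v v) (cesaro t)"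
  proof (rule antisym)
    show "opnorm v (H0_v v) (cesaro t) \<le> opnorm v (Hinf_v v) (cesaro t)"
      unfolding opnorm_def by (rule SUP_subset_mono) (use H0_sub[OF w] in auto)
    show "opnorm v (Hinf_v v) (cesaro t) \<le> opnorm v (H0_v v) (cesaro t)"
      unfolding opnorm_def[of v "Hinf_v v"]
      by (rule SUP_least) (use opnorm_ge[OF w v0 t] in auto)
  qed
qed

end
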